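(* Let $A\subset\mathbb{N}$. Suppose there exist a Følner sequence $\Phi$ in $\mathbb{N}$ and a non-principal ultrafilter $\mathfrak{p}$ on $\mathbb{N}$ such that $\mathsf{d}_\Phi\big((A-n)\cap(A-\mathfrak{p})\big)$ exists for all $n\in\mathbb{N}$ and $$\lim_{n\to\mathfrak{p}}\mathsf{d}_\Phi\big((A-n)\cap(A-\mathfrak{p})\big)>0.$$ Then there exist infinite sets $B,C\subset\mathbb{N}$ such that $B+C\subset A$.
   Context: A Følner sequence in $\mathbb{N}$ is a sequence $\Phi\colon N\mapsto\Phi_N$ of finite non-empty subsets of $\mathbb{N}$ with $|(\Phi_N+m)\triangle\Phi_N|/|\Phi_N|\to0$ for all $m\in\mathbb{N}$. For $E\subset\mathbb{N}$, $\mathsf{d}_\Phi(E)=\lim_{N\to\infty}|E\cap\Phi_N|/|\Phi_N|$ when this limit exists. For $n\in\mathbb{N}$, $A-n=\{m\in\mathbb{N}: m+n\in A\}$, and for an ultrafilter $\mathfrak{p}$ on $\mathbb{N}$, $A-\mathfrak{p}=\{n\in\mathbb{N}: A-n\in\mathfrak{p}\}$. For a bounded function $a\colon\mathbb{N}\to\mathbb{R}$, $\lim_{n\to\mathfrak{p}}a(n)$ denotes the unique $x$ such that $\{n: |a(n)-x|<\epsilon\}\in\mathfrak{p}$ for every $\epsilon>0$. *)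

theory Defs
  imports Complex_Main
begin

text \<open>Natural numbers are modelled by the type nat (including 0).\<close>

definition folner :: "(nat \<Rightarrow> nat set) \<Rightarrow> bool" where
  "folner \<Phi> \<longleftrightarrow>
     (\<forall>N. finite (\<Phi> N) \<and> \<Phi> N \<noteq> {}) \<and>
     (\<forall>m. (\<lambda>N. real (card ((((+) m) ` \<Phi> N - \<Phi> N) \<union> (\<Phi> N - ((+) m) ` \<Phi> N)))
                 / real (card (\<Phi> N))) \<longlonglongrightarrow> 0)"

definition density_ratio :: "(nat \<Rightarrow> nat set) \<Rightarrow> nat set \<Rightarrow> nat \<Rightarrow> real" where
  "density_ratio \<Phi> E N = real (card (E \<inter> \<Phi> N)) / real (card (\<Phi> N))"

definition density_exists :: "(nat \<Rightarrow> nat set) \<Rightarrow> nat set \<Rightarrow> bool" where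
  "density_exists \<Phi> E \<longleftrightarrow> convergent (density_ratio \<Phi> E)"

definition density :: "(nat \<Rightarrow> nat set) \<Rightarrow> nat set \<Rightarrow> real" where
  "density \<Phi> E = lim (density_ratio \<Phi> E)"

definition ultrafilter :: "'a filter \<Rightarrow> bool" where
  "ultrafilter F \<longleftrightarrow> F \<noteq> bot \<and> (\<forall>P. eventually P F \<or> eventually (\<lambda>x. \<not> P x) F)"

definition nonprincipal :: "'a filter \<Rightarrow> bool" where
  "nonprincipal F \<longleftrightarrow> (\<forall>a. \<not> eventually (\<lambda>x. x = a) F)"

definition shift_set :: "nat set \<Rightarrow> nat \<Rightarrow> nat set" where
  "shift_set A n = {m. m + n \<in> A}"

definition shift_uf :: "nat set \<Rightarrow> nat filter \<Rightarrow> nat set" where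
  "shift_uf A p = {n. eventually (\<lambda>x. x \<in> shift_set A n) p}"

end

theory Submission
  imports Defs "HOL-Analysis.Elementary_Topology" "HOL-Analysis.Convex"
begin

definition umean :: "(nat \<Rightarrow> nat set) \<Rightarrow> nat filter \<Rightarrow> nat set \<Rightarrow> real" where
  "umean \<Phi> p X = Lim p (density_ratio \<Phi> X)"

definition gfun :: "(nat \<Rightarrow> nat set) \<Rightarrow> nat filter \<Rightarrow> nat set \<Rightarrow> nat set \<Rightarrow> real" where
  "gfun \<Phi> p A X = Lim p (\<lambda>n. umean \<Phi> p (X \<inter> shift_set A n))"

lemma uf_nbot: "ultrafilter p \<Longrightarrow> p \<noteq> bot"
  unfolding ultrafilter_def by simp

lemma uf_dich:
  assumes "ultrafilter p" shows "eventually P p \<or> eventually (\<lambda>x. \<not> P x) p"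
proof -
  have "\<forall>P. eventually P p \<or> eventually (\<lambda>x. \<not> P x) p"
    using assms unfolding ultrafilter_def by (rule conjunct2)
  then show ?thesis by (rule spec)
qed

lemma uf_finite_mem:
  assumes uf: "ultrafilter p" and np: "nonprincipal p"
  shows "finite S \<Longrightarrow> eventually (\<lambda>x. x \<in> S) p \<Longrightarrow> False"
proof (induction S rule: finite_induct)
  case empty
  then show ?case using uf_nbot[OF uf] by (simp add: eventually_False)
next
  case (insert a S)
  have "\<not> eventually (\<lambda>x. x = a) p" using np unfolding nonprincipal_def by auto
  hence "eventually (\<lambda>x. \<not> (x = a)) p" using uf unfolding ultrafilter_def by blast
  with insert.prems have "eventually (\<lambda>x. x \<in> S) p" by (auto elim: eventually_elim2)
  then show ?case by (rule insert.IH)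
qed

lemma ev_notin:
  assumes uf: "ultrafilter p" and np: "nonprincipal p" and fin: "finite S"
  shows "eventually (\<lambda>x. x \<notin> S) p"
proof -
  have "eventually (\<lambda>x. x \<in> S) p \<or> eventually (\<lambda>x. \<not> x \<in> S) p"
    using uf unfolding ultrafilter_def by blast
  then show ?thesis using uf_finite_mem[OF uf np fin] by auto
qed

lemma p_le_seq:
  assumes uf: "ultrafilter p" and np: "nonprincipal p"
  shows "p \<le> sequentially"
  unfolding le_sequentially
proof
  fix N
  show "eventually (\<lambda>n. N \<le> n) p"
    using ev_notin[OF uf np, of "{..<N}"] by (auto elim: eventually_mono)
qed

lemma uf_lim_exists:
  fixes f :: "'a \<Rightarrow> real"
  assumes uf: "ultrafilter p" and b: "\<And>x. f x \<in> {0..1}"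
  shows "\<exists>l. (f \<longlongrightarrow> l) p"
proof -
  have nb: "filtermap f p \<noteq> bot" using uf_nbot[OF uf] by (simp add: filtermap_bot_iff)
  have "eventually (\<lambda>x. x \<in> {0..1}) (filtermap f p)"
    using b by (simp add: eventually_filtermap)
  then obtain l where l: "inf (nhds l) (filtermap f p) \<noteq> bot"
    using compact_filter[THEN iffD1, OF compact_Icc, rule_format, OF nb] by blast
  have "(f \<longlongrightarrow> l) p"
    unfolding tendsto_def
  proof (intro allI impI)
    fix S :: "real set" assume S: "open S" "l \<in> S"
    show "eventually (\<lambda>x. f x \<in> S) p"
    proof (rule ccontr)
      assume "\<not> eventually (\<lambda>x. f x \<in> S) p"
      hence e: "eventually (\<lambda>x. \<not> f x \<in> S) p" using uf unfolding ultrafilter_def by blast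
      have "eventually (\<lambda>y. y \<in> S) (nhds l)" using S eventually_nhds by blast
      moreover have "eventually (\<lambda>y. y \<notin> S) (filtermap f p)" using e by (simp add: eventually_filtermap)
      ultimately have "eventually (\<lambda>y. False) (inf (nhds l) (filtermap f p))"
        unfolding eventually_inf by blast
      with l show False by (simp add: eventually_False)
    qed
  qed
  then show ?thesis by blast
qed

lemma uf_lim:
  fixes f :: "'a \<Rightarrow> real"
  assumes uf: "ultrafilter p" and b: "\<And>x. f x \<in> {0..1}"
  shows "(f \<longlongrightarrow> Lim p f) p"
proof -
  obtain l where "(f \<longlongrightarrow> l) p" using uf_lim_exists[of p f] uf b by blast
  moreover then have "Lim p f = l" using tendsto_Lim uf_nbot[OF uf] by blast
  ultimately show ?thesis by simp
qed


context
  fixes \<Phi> :: "nat \<Rightarrow> nat set" and p :: "nat filter"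
  assumes fol: "folner \<Phi>" and uf: "ultrafilter p" and np: "nonprincipal p"
begin

lemma finP: "finite (\<Phi> N)" and neP: "\<Phi> N \<noteq> {}"
  using fol unfolding folner_def by auto

lemma cardP: "card (\<Phi> N) > 0"
  using finP neP by (simp add: card_gt_0_iff)

lemma ratio_01: "density_ratio \<Phi> X N \<in> {0..1}"
proof -
  have "card (X \<inter> \<Phi> N) \<le> card (\<Phi> N)" using finP by (intro card_mono) auto
  then show ?thesis using cardP unfolding density_ratio_def by (auto simp: divide_le_eq_1)
qed

lemma mu_tendsto: "(density_ratio \<Phi> X \<longlongrightarrow> umean \<Phi> p X) p"
  unfolding umean_def using uf_lim[OF uf] ratio_01 by blast

lemma mu_01: "umean \<Phi> p X \<in> {0..1}"
proof -
  have "umean \<Phi> p X \<ge> 0"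
    by (rule tendsto_lowerbound[OF mu_tendsto]) (use ratio_01 uf_nbot[OF uf] in auto)
  moreover have "umean \<Phi> p X \<le> 1"
    by (rule tendsto_upperbound[OF mu_tendsto]) (use ratio_01 uf_nbot[OF uf] in auto)
  ultimately show ?thesis by auto
qed

lemma mu_mono:
  assumes "X \<subseteq> Y" shows "umean \<Phi> p X \<le> umean \<Phi> p Y"
proof (rule tendsto_le[OF uf_nbot[OF uf] mu_tendsto mu_tendsto])
  show "eventually (\<lambda>N. density_ratio \<Phi> X N \<le> density_ratio \<Phi> Y N) p"
  proof (intro always_eventually allI)
    fix N
    have "card (X \<inter> \<Phi> N) \<le> card (Y \<inter> \<Phi> N)" using finP assms by (intro card_mono) auto
    then show "density_ratio \<Phi> X N \<le> density_ratio \<Phi> Y N"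
      unfolding density_ratio_def by (simp add: divide_right_mono)
  qed
qed

lemma mu_density:
  assumes "density_exists \<Phi> X" shows "umean \<Phi> p X = density \<Phi> X"
proof -
  have "(density_ratio \<Phi> X \<longlongrightarrow> density \<Phi> X) sequentially"
    using assms unfolding density_exists_def density_def by (simp add: convergent_LIMSEQ_iff)
  then have "(density_ratio \<Phi> X \<longlongrightarrow> density \<Phi> X) p"
    using tendsto_mono p_le_seq[OF uf np] by blast
  then show ?thesis unfolding umean_def using tendsto_Lim uf_nbot[OF uf] by blast
qed

lemma inv_card_0: "((\<lambda>N. 1 / real (card (\<Phi> N))) \<longlongrightarrow> 0) sequentially"
proof -
  define S where "S N = ((+) 1 ` \<Phi> N - \<Phi> N) \<union> (\<Phi> N - (+) 1 ` \<Phi> N)" for N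
  have R: "((\<lambda>N. real (card (S N)) / real (card (\<Phi> N))) \<longlongrightarrow> 0) sequentially"
    using fol unfolding folner_def S_def by blast
  have ge1: "card (S N) \<ge> 1" for N
  proof -
    have "1 + Max (\<Phi> N) \<in> S N"
      using finP[of N] neP[of N] unfolding S_def by (auto dest: Max_ge)
    moreover have "finite (S N)" using finP[of N] unfolding S_def by auto
    ultimately show ?thesis by (metis card_0_eq empty_iff less_one not_le)
  qed
  show ?thesis
  proof (rule tendsto_sandwich[OF _ _ tendsto_const R])
    show "eventually (\<lambda>N. 0 \<le> 1 / real (card (\<Phi> N))) sequentially" by simp
    show "eventually (\<lambda>N. 1 / real (card (\<Phi> N)) \<le> real (card (S N)) / real (card (\<Phi> N))) sequentially"
      using ge1 cardP by (intro always_eventually allI) (simp add: divide_right_mono)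
  qed
qed

lemma mu_finite:
  assumes "finite X" shows "umean \<Phi> p X = 0"
proof -
  have T: "((\<lambda>N. real (card X) * (1 / real (card (\<Phi> N)))) \<longlongrightarrow> 0) sequentially"
    using tendsto_mult_right_zero[OF inv_card_0] by simp
  have "(density_ratio \<Phi> X \<longlongrightarrow> 0) sequentially"
  proof (rule tendsto_sandwich[OF _ _ tendsto_const T])
    show "eventually (\<lambda>N. 0 \<le> density_ratio \<Phi> X N) sequentially"
      using ratio_01 by (intro always_eventually allI) auto
    show "eventually (\<lambda>N. density_ratio \<Phi> X N \<le> real (card X) * (1 / real (card (\<Phi> N)))) sequentially"
    proof (intro always_eventually allI)
      fix N
      have "card (X \<inter> \<Phi> N) \<le> card X" using assms by (intro card_mono) auto
      then show "density_ratio \<Phi> X N \<le> real (card X) * (1 / real (card (\<Phi> N)))"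
        unfolding density_ratio_def using cardP[of N] by (simp add: divide_right_mono)
    qed
  qed
  then have "(density_ratio \<Phi> X \<longlongrightarrow> 0) p"
    using tendsto_mono p_le_seq[OF uf np] by blast
  then show ?thesis unfolding umean_def using tendsto_Lim uf_nbot[OF uf] by blast
qed

lemma card_as_sum: "real (card (Y \<inter> \<Phi> N)) = (\<Sum>m\<in>\<Phi> N. (of_bool (m \<in> Y) :: real))"
proof -
  have "(\<Sum>m\<in>\<Phi> N. (of_bool (m \<in> Y) :: real)) = of_nat (card (\<Phi> N \<inter> {m. m \<in> Y}))"
    using finP[of N] by (intro sum_of_bool_eq)
  also have "\<Phi> N \<inter> {m. m \<in> Y} = Y \<inter> \<Phi> N" by auto
  finally show ?thesis by simp
qed

lemma ratio_CS:
  assumes fS: "finite S"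
  shows "(\<Sum>i\<in>S. density_ratio \<Phi> (X i) N)\<^sup>2 \<le> (\<Sum>i\<in>S. \<Sum>j\<in>S. density_ratio \<Phi> (X i \<inter> X j) N)"
proof -
  define F where "F = \<Phi> N"
  define n where "n = real (card F)"
  define c where "c m = (\<Sum>i\<in>S. (of_bool (m \<in> X i) :: real))" for m
  have n0: "n > 0" using cardP unfolding n_def F_def by simp
  have "(\<Sum>i\<in>S. real (card (X i \<inter> F))) = (\<Sum>i\<in>S. \<Sum>m\<in>F. (of_bool (m \<in> X i) :: real))"
    unfolding F_def using card_as_sum by simp
  also have "\<dots> = (\<Sum>m\<in>F. c m)" unfolding c_def by (rule sum.swap)
  finally have L: "(\<Sum>i\<in>S. real (card (X i \<inter> F))) = (\<Sum>m\<in>F. c m)" .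
  have "(\<Sum>i\<in>S. \<Sum>j\<in>S. real (card (X i \<inter> X j \<inter> F)))
      = (\<Sum>i\<in>S. \<Sum>j\<in>S. \<Sum>m\<in>F. (of_bool (m \<in> X i) :: real) * of_bool (m \<in> X j))"
    unfolding F_def using card_as_sum by (simp add: of_bool_conj)
  also have "\<dots> = (\<Sum>i\<in>S. \<Sum>m\<in>F. \<Sum>j\<in>S. (of_bool (m \<in> X i) :: real) * of_bool (m \<in> X j))"
    by (intro sum.cong refl sum.swap)
  also have "\<dots> = (\<Sum>m\<in>F. \<Sum>i\<in>S. \<Sum>j\<in>S. (of_bool (m \<in> X i) :: real) * of_bool (m \<in> X j))"
    by (rule sum.swap)
  also have "\<dots> = (\<Sum>m\<in>F. (c m)\<^sup>2)"
    unfolding c_def power2_eq_square by (simp add: sum_product)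
  finally have R: "(\<Sum>i\<in>S. \<Sum>j\<in>S. real (card (X i \<inter> X j \<inter> F))) = (\<Sum>m\<in>F. (c m)\<^sup>2)" .
  have CS: "(\<Sum>m\<in>F. c m)\<^sup>2 \<le> (\<Sum>m\<in>F. (c m)\<^sup>2) * n"
    unfolding n_def by (rule sum_squared_le_sum_of_squares)
  have "(\<Sum>i\<in>S. density_ratio \<Phi> (X i) N) = (\<Sum>m\<in>F. c m) / n"
    unfolding density_ratio_def F_def[symmetric] n_def[symmetric] L[symmetric]
    by (simp add: sum_divide_distrib)
  moreover have "(\<Sum>i\<in>S. \<Sum>j\<in>S. density_ratio \<Phi> (X i \<inter> X j) N) = (\<Sum>m\<in>F. (c m)\<^sup>2) / n"
    unfolding density_ratio_def F_def[symmetric] n_def[symmetric] R[symmetric]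
    by (simp add: sum_divide_distrib)
  moreover have "((\<Sum>m\<in>F. c m) / n)\<^sup>2 \<le> (\<Sum>m\<in>F. (c m)\<^sup>2) / n"
    using CS n0 by (simp add: power_divide divide_simps power2_eq_square)
  ultimately show ?thesis by simp
qed

lemma mu_CS:
  assumes fS: "finite S"
  shows "(\<Sum>i\<in>S. umean \<Phi> p (X i))\<^sup>2 \<le> (\<Sum>i\<in>S. \<Sum>j\<in>S. umean \<Phi> p (X i \<inter> X j))"
proof (rule tendsto_le[OF uf_nbot[OF uf]])
  show "((\<lambda>N. \<Sum>i\<in>S. \<Sum>j\<in>S. density_ratio \<Phi> (X i \<inter> X j) N) \<longlongrightarrow> (\<Sum>i\<in>S. \<Sum>j\<in>S. umean \<Phi> p (X i \<inter> X j))) p"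
    by (intro tendsto_sum mu_tendsto)
  show "((\<lambda>N. (\<Sum>i\<in>S. density_ratio \<Phi> (X i) N)\<^sup>2) \<longlongrightarrow> (\<Sum>i\<in>S. umean \<Phi> p (X i))\<^sup>2) p"
    by (intro tendsto_power tendsto_sum mu_tendsto)
  show "eventually (\<lambda>N. (\<Sum>i\<in>S. density_ratio \<Phi> (X i) N)\<^sup>2 \<le> (\<Sum>i\<in>S. \<Sum>j\<in>S. density_ratio \<Phi> (X i \<inter> X j) N)) p"
    using ratio_CS[OF fS] by (intro always_eventually allI) auto
qed

lemma g_tendsto: "((\<lambda>n. umean \<Phi> p (X \<inter> shift_set A n)) \<longlongrightarrow> gfun \<Phi> p A X) p"
  unfolding gfun_def by (rule uf_lim[OF uf]) (rule mu_01)

lemma g_le_mu: "gfun \<Phi> p A X \<le> umean \<Phi> p X"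
proof (rule tendsto_upperbound[OF g_tendsto])
  show "eventually (\<lambda>n. umean \<Phi> p (X \<inter> shift_set A n) \<le> umean \<Phi> p X) p"
    by (intro always_eventually allI mu_mono) blast
  show "p \<noteq> bot" using uf_nbot[OF uf] .
qed

lemma claim:
  assumes pos: "gfun \<Phi> p A D > 0"
  shows "eventually (\<lambda>c. gfun \<Phi> p A (D \<inter> shift_set A c) > 0) p"
proof (rule ccontr)
  assume nc: "\<not> ?thesis"
  define \<alpha> where "\<alpha> = gfun \<Phi> p A D"
  define X where "X c = D \<inter> shift_set A c" for c
  define a where "a i j = umean \<Phi> p (X i \<inter> X j)" for i j
  define \<epsilon> where "\<epsilon> = \<alpha>\<^sup>2 / 8"
  have apos: "\<alpha> > 0" using pos unfolding \<alpha>_def .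
  have eps: "\<epsilon> > 0" using apos unfolding \<epsilon>_def by simp
  have XX: "X i \<inter> shift_set A n = X i \<inter> X n" for i n unfolding X_def by auto
  have ev0: "eventually (\<lambda>c. \<not> gfun \<Phi> p A (X c) > 0) p"
    using uf_dich[OF uf, of "\<lambda>c. gfun \<Phi> p A (D \<inter> shift_set A c) > 0"] nc
    unfolding X_def by simp
  have evb: "eventually (\<lambda>c. umean \<Phi> p (X c) > \<alpha>/2) p"
    unfolding X_def by (rule order_tendstoD(1)[OF g_tendsto]) (use apos in \<open>simp add: \<alpha>_def\<close>)
  define P where "P c \<longleftrightarrow> umean \<Phi> p (X c) > \<alpha>/2 \<and> \<not> gfun \<Phi> p A (X c) > 0" for c
  have evP: "eventually P p" unfolding P_def by (intro eventually_conj evb ev0)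
  have small: "eventually (\<lambda>n. a i n < \<epsilon>) p" if "P i" for i
  proof -
    have "gfun \<Phi> p A (X i) < \<epsilon>" using eps that P_def by auto
    moreover have "((\<lambda>n. a i n) \<longlongrightarrow> gfun \<Phi> p A (X i)) p"
      using g_tendsto[of "X i" A] unfolding a_def XX .
    ultimately show ?thesis using order_tendstoD(2) by blast
  qed
  have sym: "a i j = a j i" for i j unfolding a_def by (simp add: Int_commute)
  have build: "\<exists>S. finite S \<and> card S = k \<and> (\<forall>i\<in>S. P i) \<and> (\<forall>i\<in>S. \<forall>j\<in>S. i \<noteq> j \<longrightarrow> a i j < \<epsilon>)" for k
  proof (induction k)
    case 0 show ?case by (intro exI[of _ "{}"]) auto
  next
    case (Suc k)
    then obtain S where S: "finite S" "card S = k" "\<forall>i\<in>S. P i" "\<forall>i\<in>S. \<forall>j\<in>S. i \<noteq> j \<longrightarrow> a i j < \<epsilon>"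
      by blast
    have e1: "eventually (\<lambda>c. \<forall>i\<in>S. a i c < \<epsilon>) p"
      using S(1,3) small by (simp add: eventually_ball_finite)
    have "eventually (\<lambda>c. P c \<and> c \<notin> S \<and> (\<forall>i\<in>S. a i c < \<epsilon>)) p"
      by (intro eventually_conj evP ev_notin[OF uf np S(1)] e1)
    then have "\<exists>c. P c \<and> c \<notin> S \<and> (\<forall>i\<in>S. a i c < \<epsilon>)"
      using eventually_happens uf_nbot[OF uf] by blast
    then obtain c where c: "P c" "c \<notin> S" "\<forall>i\<in>S. a i c < \<epsilon>" by blast
    have c4: "\<forall>i\<in>S. a c i < \<epsilon>" using c(3) sym by metis
    show ?case
      by (rule exI[of _ "insert c S"]) (use S c c4 in auto)
  qed
  obtain k :: nat where k: "8 / \<alpha>\<^sup>2 < real k" using reals_Archimedean2[of "8 / \<alpha>\<^sup>2"] by blast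
  then obtain S where S: "finite S" "card S = k" "\<forall>i\<in>S. P i" "\<forall>i\<in>S. \<forall>j\<in>S. i \<noteq> j \<longrightarrow> a i j < \<epsilon>"
    using build[of k] by blast
  have CS: "(\<Sum>i\<in>S. umean \<Phi> p (X i))\<^sup>2 \<le> (\<Sum>i\<in>S. \<Sum>j\<in>S. a i j)"
    using mu_CS[OF S(1)] unfolding a_def .
  have row: "(\<Sum>j\<in>S. a i j) \<le> 1 + real k * \<epsilon>" if iS: "i \<in> S" for i
  proof -
    have "(\<Sum>j\<in>S. a i j) \<le> (\<Sum>j\<in>S. (if j = i then 1 else 0) + \<epsilon>)"
    proof (rule sum_mono)
      fix j assume jS: "j \<in> S"
      show "a i j \<le> (if j = i then 1 else 0) + \<epsilon>"
      proof (cases "j = i")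
        case True
        have "umean \<Phi> p (X i \<inter> X j) \<in> {0..1}" by (rule mu_01)
        then have "a i j \<le> 1" unfolding a_def by (simp only: atLeastAtMost_iff)
        moreover have "(if j = i then 1 else 0) + \<epsilon> = 1 + \<epsilon>" unfolding True by (simp only: refl if_True)
        ultimately show ?thesis using eps by linarith
      next
        case False
        have ij: "i \<noteq> j" using False by simp
        have "a i j < \<epsilon>" using bspec[OF bspec[OF S(4) iS] jS] ij by (rule mp)
        moreover have "(if j = i then 1 else 0) + \<epsilon> = 0 + \<epsilon>" using False by (simp only: if_False)
        ultimately show ?thesis by linarith
      qed
    qed
    also have "\<dots> = (\<Sum>j\<in>S. (if j = i then 1 else 0)) + (\<Sum>j\<in>S. \<epsilon>)"
      by (rule sum.distrib)
    also have "(\<Sum>j\<in>S. (if j = i then 1 else 0::real)) = 1"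
      using S(1) iS by (simp add: sum.delta)
    also have "(\<Sum>j\<in>S. \<epsilon>) = real k * \<epsilon>"
      using S(2) by simp
    finally show ?thesis .
  qed
  have up: "(\<Sum>i\<in>S. \<Sum>j\<in>S. a i j) \<le> real k * (1 + real k * \<epsilon>)"
  proof -
    have "(\<Sum>i\<in>S. \<Sum>j\<in>S. a i j) \<le> (\<Sum>i\<in>S. 1 + real k * \<epsilon>)" by (rule sum_mono) (rule row)
    also have "\<dots> = real k * (1 + real k * \<epsilon>)" using S(2) by simp
    finally show ?thesis .
  qed
  have lowsum: "real k * (\<alpha>/2) \<le> (\<Sum>i\<in>S. umean \<Phi> p (X i))"
  proof -
    have "(\<Sum>i\<in>S. \<alpha>/2) \<le> (\<Sum>i\<in>S. umean \<Phi> p (X i))"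
      by (rule sum_mono) (use S(3) P_def in auto)
    then show ?thesis using S(2) by simp
  qed
  have "(real k * (\<alpha>/2))\<^sup>2 \<le> (\<Sum>i\<in>S. umean \<Phi> p (X i))\<^sup>2"
    using lowsum apos by (intro power_mono) auto
  with CS up have ineq: "(real k * (\<alpha>/2))\<^sup>2 \<le> real k * (1 + real k * \<epsilon>)" by linarith
  have q0: "8 / \<alpha>\<^sup>2 > 0" using apos by simp
  have kpos: "real k > 0" using k q0 by linarith
  define t where "t = real k * \<alpha>\<^sup>2"
  have k8: "t > 8" using k pos_divide_less_eq[of "\<alpha>\<^sup>2" 8 "real k"] apos unfolding t_def by simp
  have e1: "(real k * (\<alpha>/2))\<^sup>2 = real k * (t / 4)"
    unfolding t_def by (simp add: power2_eq_square)
  have e2: "real k * (1 + real k * \<epsilon>) = real k * (1 + t / 8)"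
    unfolding t_def \<epsilon>_def by simp
  have "real k * (t / 4) \<le> real k * (1 + t / 8)" using ineq e1 e2 by simp
  then have "t / 4 \<le> 1 + t / 8" using kpos by simp
  with k8 show False by simp
qed

end

theorem theorem2p2:
  fixes A :: "nat set"
  assumes "folner \<Phi>"
    and "ultrafilter p" and "nonprincipal p"
    and "\<forall>n. density_exists \<Phi> (shift_set A n \<inter> shift_uf A p)"
    and "\<exists>x>0. ((\<lambda>n. density \<Phi> (shift_set A n \<inter> shift_uf A p)) \<longlongrightarrow> x) p"
  shows "\<exists>B C :: nat set. infinite B \<and> infinite C \<and> {b + c | b c. b \<in> B \<and> c \<in> C} \<subseteq> A"
proof -
  note fol = assms(1) and uf = assms(2) and np = assms(3)
  define L where "L = shift_uf A p"
  define Ds where "Ds C = L \<inter> (\<Inter>c\<in>C. shift_set A c)" for C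
  define Inv where "Inv BC \<longleftrightarrow> finite (fst BC) \<and> finite (snd BC) \<and> fst BC \<subseteq> L \<and>
     (\<forall>b\<in>fst BC. \<forall>c\<in>snd BC. b + c \<in> A) \<and> gfun \<Phi> p A (Ds (snd BC)) > 0"
    for BC :: "nat set \<times> nat set"
  have base: "Inv ({}, {})"
  proof -
    obtain x where x: "x > 0" "((\<lambda>n. density \<Phi> (shift_set A n \<inter> shift_uf A p)) \<longlongrightarrow> x) p"
      using assms(5) by blast
    have eq: "(\<lambda>n. umean \<Phi> p (L \<inter> shift_set A n)) = (\<lambda>n. density \<Phi> (shift_set A n \<inter> shift_uf A p))"
    proof
      fix n
      have "L \<inter> shift_set A n = shift_set A n \<inter> shift_uf A p" unfolding L_def by blast
      then show "umean \<Phi> p (L \<inter> shift_set A n) = density \<Phi> (shift_set A n \<inter> shift_uf A p)"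
        using mu_density[OF fol uf np] assms(4) by simp
    qed
    have "((\<lambda>n. umean \<Phi> p (L \<inter> shift_set A n)) \<longlongrightarrow> gfun \<Phi> p A L) p"
      by (rule g_tendsto[OF fol uf np])
    then have "((\<lambda>n. density \<Phi> (shift_set A n \<inter> shift_uf A p)) \<longlongrightarrow> gfun \<Phi> p A L) p"
      unfolding eq .
    then have "gfun \<Phi> p A L = x" by (rule tendsto_unique[OF uf_nbot[OF uf] _ x(2)])
    moreover have "Ds {} = L" unfolding Ds_def by simp
    ultimately show ?thesis unfolding Inv_def using x(1) by simp
  qed
  have ext: "\<exists>b c. b \<notin> fst BC \<and> c \<notin> snd BC \<and> Inv (insert b (fst BC), insert c (snd BC))"
    if I: "Inv BC" for BC
  proof -
    define B where "B = fst BC"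
    define C where "C = snd BC"
    define D where "D = Ds C"
    have fB: "finite B" and fC: "finite C" and BL: "B \<subseteq> L" and BC: "\<forall>b\<in>B. \<forall>c\<in>C. b + c \<in> A"
      and gD: "gfun \<Phi> p A D > 0"
    proof -
      have I': "finite (fst BC) \<and> finite (snd BC) \<and> fst BC \<subseteq> L \<and>
        (\<forall>b\<in>fst BC. \<forall>c\<in>snd BC. b + c \<in> A) \<and> gfun \<Phi> p A (Ds (snd BC)) > 0"
        using I unfolding Inv_def .
      show "finite B" using I' unfolding B_def by blast
      show "finite C" using I' unfolding C_def by blast
      show "B \<subseteq> L" using I' unfolding B_def by blast
      show "\<forall>b\<in>B. \<forall>c\<in>C. b + c \<in> A" using I' unfolding B_def C_def by blast
      show "gfun \<Phi> p A D > 0" using I' unfolding D_def C_def by blast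
    qed
    have e1: "eventually (\<lambda>c. gfun \<Phi> p A (D \<inter> shift_set A c) > 0) p"
      by (rule claim[OF fol uf np gD])
    have e2: "eventually (\<lambda>c. c \<notin> C) p" by (rule ev_notin[OF uf np fC])
    have e3: "eventually (\<lambda>c. \<forall>b\<in>B. b + c \<in> A) p"
    proof -
      have "eventually (\<lambda>c. b + c \<in> A) p" if bB: "b \<in> B" for b
      proof -
        have "b \<in> shift_uf A p" using BL bB unfolding L_def by blast
        then have "eventually (\<lambda>x. x \<in> shift_set A b) p" unfolding shift_uf_def by simp
        then show ?thesis unfolding shift_set_def by (simp add: add.commute)
      qed
      then show ?thesis using fB by (simp add: eventually_ball_finite)
    qed
    have "eventually (\<lambda>c. gfun \<Phi> p A (D \<inter> shift_set A c) > 0 \<and> c \<notin> C \<and> (\<forall>b\<in>B. b + c \<in> A)) p"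
      by (intro eventually_conj e1 e2 e3)
    then have "\<exists>c. gfun \<Phi> p A (D \<inter> shift_set A c) > 0 \<and> c \<notin> C \<and> (\<forall>b\<in>B. b + c \<in> A)"
      using eventually_happens uf_nbot[OF uf] by blast
    then obtain c where c1: "gfun \<Phi> p A (D \<inter> shift_set A c) > 0" and c2: "c \<notin> C"
      and c3: "\<forall>b\<in>B. b + c \<in> A" by blast
    define D' where "D' = D \<inter> shift_set A c"
    have "umean \<Phi> p D' > 0" using c1 g_le_mu[OF fol uf np, of A D'] unfolding D'_def by linarith
    have "infinite D'"
    proof
      assume "finite D'"
      then have "umean \<Phi> p D' = 0" by (rule mu_finite[OF fol uf np])
      with \<open>umean \<Phi> p D' > 0\<close> show False by simp
    qed
    then have "infinite (D' - B)" using fB by (rule Diff_infinite_finite[rotated])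
    then have "D' - B \<noteq> {}" by (rule infinite_imp_nonempty)
    then obtain b where "b \<in> D' - B" by blast
    then have b: "b \<in> D'" "b \<notin> B" by simp_all
    have Deq: "Ds (insert c C) = D'" unfolding D'_def D_def Ds_def by (simp add: Int_ac)
    have bL: "b \<in> L" using b(1) unfolding D'_def D_def Ds_def by blast
    have bC: "\<forall>c'\<in>C. b + c' \<in> A" using b(1) unfolding D'_def D_def Ds_def shift_set_def by blast
    have bc: "b + c \<in> A" using b(1) unfolding D'_def shift_set_def by blast
    have "Inv (insert b B, insert c C)"
      unfolding Inv_def fst_conv snd_conv Deq
      using fB fC BL bL BC bC bc c3 c1 unfolding D'_def by auto
    then show ?thesis using b(2) c2 unfolding B_def C_def by blast
  qed
  define nxt where "nxt BC = (SOME BC'. \<exists>b c. b \<notin> fst BC \<and> c \<notin> snd BC \<and>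
      BC' = (insert b (fst BC), insert c (snd BC)) \<and> Inv BC')" for BC
  have nxt: "\<exists>b c. b \<notin> fst BC \<and> c \<notin> snd BC \<and> nxt BC = (insert b (fst BC), insert c (snd BC)) \<and> Inv (nxt BC)"
    if "Inv BC" for BC
  proof -
    have "\<exists>BC'. \<exists>b c. b \<notin> fst BC \<and> c \<notin> snd BC \<and> BC' = (insert b (fst BC), insert c (snd BC)) \<and> Inv BC'"
      using ext[OF that] by blast
    then show ?thesis unfolding nxt_def by (rule someI_ex)
  qed
  define st where "st = rec_nat ({}, {}) (\<lambda>_ BC. nxt BC)"
  have st0: "st 0 = ({}, {})" and stS: "st (Suc k) = nxt (st k)" for k
    unfolding st_def by simp_all
  have inv: "Inv (st k) \<and> card (fst (st k)) = k \<and> card (snd (st k)) = k" for k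
  proof (induction k)
    case 0 show ?case using base st0 by simp
  next
    case (Suc k)
    then have I: "Inv (st k)" and ck: "card (fst (st k)) = k" "card (snd (st k)) = k" by auto
    obtain b c where bc: "b \<notin> fst (st k)" "c \<notin> snd (st k)"
      "nxt (st k) = (insert b (fst (st k)), insert c (snd (st k)))" "Inv (nxt (st k))"
      using nxt[OF I] by blast
    have f: "finite (fst (st k))" "finite (snd (st k))" using I unfolding Inv_def by auto
    show ?case unfolding stS using bc ck f by simp
  qed
  have monoS: "fst (st k) \<subseteq> fst (st (Suc k)) \<and> snd (st k) \<subseteq> snd (st (Suc k))" for k
  proof -
    obtain b c where "nxt (st k) = (insert b (fst (st k)), insert c (snd (st k)))"
      using nxt[OF conjunct1[OF inv[of k]]] by blast
    then show ?thesis unfolding stS by auto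
  qed
  have mono1: "fst (st i) \<subseteq> fst (st j)" if "i \<le> j" for i j
  proof -
    have "\<And>n. fst (st n) \<subseteq> fst (st (Suc n))" using monoS by blast
    then show ?thesis using that by (rule lift_Suc_mono_le)
  qed
  have mono2: "snd (st i) \<subseteq> snd (st j)" if "i \<le> j" for i j
  proof -
    have "\<And>n. snd (st n) \<subseteq> snd (st (Suc n))" using monoS by blast
    then show ?thesis using that by (rule lift_Suc_mono_le)
  qed
  define B where "B = (\<Union>k. fst (st k))"
  define C where "C = (\<Union>k. snd (st k))"
  have infB: "infinite B"
  proof
    assume "finite B"
    have "fst (st (Suc (card B))) \<subseteq> B" unfolding B_def by blast
    then have "card (fst (st (Suc (card B)))) \<le> card B" using \<open>finite B\<close> by (rule card_mono[rotated])
    then show False using inv by simp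
  qed
  have infC: "infinite C"
  proof
    assume "finite C"
    have "snd (st (Suc (card C))) \<subseteq> C" unfolding C_def by blast
    then have "card (snd (st (Suc (card C)))) \<le> card C" using \<open>finite C\<close> by (rule card_mono[rotated])
    then show False using inv by simp
  qed
  have sub: "{b + c | b c. b \<in> B \<and> c \<in> C} \<subseteq> A"
  proof
    fix x assume "x \<in> {b + c | b c. b \<in> B \<and> c \<in> C}"
    then obtain b c where x: "x = b + c" and bB: "b \<in> B" and cC: "c \<in> C" by blast
    obtain i where i: "b \<in> fst (st i)" using bB unfolding B_def by blast
    obtain j where j: "c \<in> snd (st j)" using cC unfolding C_def by blast
    have "b \<in> fst (st (max i j))" using i mono1[of i "max i j"] by auto
    moreover have "c \<in> snd (st (max i j))" using j mono2[of j "max i j"] by auto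
    moreover have "\<forall>b\<in>fst (st (max i j)). \<forall>c\<in>snd (st (max i j)). b + c \<in> A"
      using conjunct1[OF inv[of "max i j"]] unfolding Inv_def by blast
    ultimately show "x \<in> A" unfolding x by blast
  qed
  show ?thesis using infB infC sub by blast
qed

end
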